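(* Let $D$ be a finite directed graph with $n$ vertices having two distinct complete sources $c$ and $c'$. Let $\mathcal{T}_c$ be the set of spanning rooted directed trees $T$ of $D$ (subgraphs of $D$ containing all vertices) in which $c$ is a leaf. For $T\in\mathcal{T}_c$ let $S_T$ be the subcomplex defined below. Then $S_T\subseteq\Delta(D)$ for each $T\in\mathcal{T}_c$ and $$\Delta(D)=\bigcup_{T\in\mathcal{T}_c}S_T .$$ Definition of $S_T$: let $x_1$ be the root of $T$ and $x_1\to x_2\to\cdots\to x_k\to c$ the unique directed path in $T$ from $x_1$ to $c$; let $\sigma_T=\{\overrightarrow{x_1x_2},\ldots,\overrightarrow{x_{k-1}x_k},\overrightarrow{x_kc},\overrightarrow{cx_1}\}$ and let $\partial\sigma_T$ be the complex of all proper subsets of $\sigma_T$. Let $y_1,\ldots,y_r$ ($r=n-k-1$) be the remaining vertices of $D$, and for each $j$ let $z_j$ be the unique vertex with $\overrightarrow{z_jy_j}\in E(T)$. Then $$S_T=\partial\sigma_T*\{\overrightarrow{z_1y_1},\overrightarrow{cy_1}\}*\cdots*\{\overrightarrow{z_ry_r},\overrightarrow{cy_r}\},$$ where $*$ is the join of simplicial complexes and $\{a,b\}$ denotes the $0$-dimensional complex with the two vertices $a,b$ and no edge.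
   Context: For a finite directed graph $D$ (no loops, no multiple edges), the complex of directed trees $\Delta(D)$ has the directed edges of $D$ as vertices, and its faces are the edge sets of directed forests in $D$ (vertex-disjoint unions of rooted directed trees; equivalently, edge sets in which every vertex has in-degree at most $1$ and there is no directed cycle). A rooted directed tree with root $r$ is an acyclic digraph in which each vertex is reached from $r$ by a unique directed path; a leaf is a vertex of out-degree $0$ in the tree. A vertex $c$ of $D$ is a complete source if $\overrightarrow{cy}\in E(D)$ for every vertex $y\neq c$. We write $\overrightarrow{xy}$ for the directed edge from $x$ to $y$. *)

theory Defs
  imports Main
begin

text \<open>A finite digraph D is given by a vertex set V and an edge relation E \<subseteq> V \<times> V
  (pairs (x,y) stand for the directed edge from x to y); no loops.\<close>

definition digraph :: "'a set \<Rightarrow> ('a \<times> 'a) set \<Rightarrow> bool" where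
  "digraph V E \<longleftrightarrow> finite V \<and> E \<subseteq> V \<times> V \<and> (\<forall>x. (x, x) \<notin> E)"

definition complete_source :: "'a set \<Rightarrow> ('a \<times> 'a) set \<Rightarrow> 'a \<Rightarrow> bool" where
  "complete_source V E c \<longleftrightarrow> c \<in> V \<and> (\<forall>y\<in>V. y \<noteq> c \<longrightarrow> (c, y) \<in> E)"

definition directed_forest :: "('a \<times> 'a) set \<Rightarrow> ('a \<times> 'a) set \<Rightarrow> bool" where
  "directed_forest E F \<longleftrightarrow> F \<subseteq> E \<and> (\<forall>y. card {x. (x, y) \<in> F} \<le> 1 \<and> finite {x. (x, y) \<in> F})
     \<and> acyclic F"

text \<open>The complex of directed trees, as its set of faces.\<close>
definition tree_complex :: "('a \<times> 'a) set \<Rightarrow> ('a \<times> 'a) set set" where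
  "tree_complex E = {F. directed_forest E F}"

definition dpath :: "('a \<times> 'a) set \<Rightarrow> 'a \<Rightarrow> 'a \<Rightarrow> 'a list \<Rightarrow> bool" where
  "dpath T u v xs \<longleftrightarrow> xs \<noteq> [] \<and> hd xs = u \<and> last xs = v \<and> distinct xs \<and>
     (\<forall>i. Suc i < length xs \<longrightarrow> (xs ! i, xs ! Suc i) \<in> T)"

definition rooted_tree :: "'a set \<Rightarrow> ('a \<times> 'a) set \<Rightarrow> 'a \<Rightarrow> bool" where
  "rooted_tree V T r \<longleftrightarrow> T \<subseteq> V \<times> V \<and> r \<in> V \<and> acyclic T \<and>
     (\<forall>v\<in>V. \<exists>!xs. dpath T r v xs)"

definition spanning_tree :: "'a set \<Rightarrow> ('a \<times> 'a) set \<Rightarrow> ('a \<times> 'a) set \<Rightarrow> bool" where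
  "spanning_tree V E T \<longleftrightarrow> T \<subseteq> E \<and> (\<exists>r. rooted_tree V T r)"

definition tree_root :: "'a set \<Rightarrow> ('a \<times> 'a) set \<Rightarrow> 'a" where
  "tree_root V T = (THE r. rooted_tree V T r)"

definition is_leaf :: "'a set \<Rightarrow> ('a \<times> 'a) set \<Rightarrow> 'a \<Rightarrow> bool" where
  "is_leaf V T c \<longleftrightarrow> c \<in> V \<and> (\<forall>y. (c, y) \<notin> T)"

definition trees_leaf :: "'a set \<Rightarrow> ('a \<times> 'a) set \<Rightarrow> 'a \<Rightarrow> ('a \<times> 'a) set set" where
  "trees_leaf V E c = {T. spanning_tree V E T \<and> is_leaf V T c}"

text \<open>Simplicial complexes as sets of faces. Join of an indexed family of complexes
  (with pairwise disjoint vertex sets), boundary of a simplex, 0-dim complex on two vertices.\<close>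
definition join :: "'b set set \<Rightarrow> 'b set set \<Rightarrow> 'b set set" where
  "join K L = {A \<union> B | A B. A \<in> K \<and> B \<in> L}"

definition join_family :: "'i set \<Rightarrow> ('i \<Rightarrow> 'b set set) \<Rightarrow> 'b set set" where
  "join_family I K = {\<Union>i\<in>I. f i | f. \<forall>i\<in>I. f i \<in> K i}"

definition simplex_boundary :: "'b set \<Rightarrow> 'b set set" where
  "simplex_boundary \<sigma> = {A. A \<subset> \<sigma>}"

definition two_points :: "'b \<Rightarrow> 'b \<Rightarrow> 'b set set" where
  "two_points a b = {{}, {a}, {b}}"

text \<open>The path x_1 -> ... -> x_k -> c from the root to c (as list [x_1,...,x_k,c]).\<close>
definition root_path :: "'a set \<Rightarrow> ('a \<times> 'a) set \<Rightarrow> 'a \<Rightarrow> 'a list" where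
  "root_path V T c = (THE xs. dpath T (tree_root V T) c xs)"

definition sigma_T :: "'a set \<Rightarrow> ('a \<times> 'a) set \<Rightarrow> 'a \<Rightarrow> ('a \<times> 'a) set" where
  "sigma_T V T c = (let P = root_path V T c in
      {(P ! i, P ! Suc i) | i. Suc i < length P} \<union> {(c, tree_root V T)})"

definition parent :: "('a \<times> 'a) set \<Rightarrow> 'a \<Rightarrow> 'a" where
  "parent T y = (THE z. (z, y) \<in> T)"

definition S_T :: "'a set \<Rightarrow> ('a \<times> 'a) set \<Rightarrow> 'a \<Rightarrow> ('a \<times> 'a) set set" where
  "S_T V T c = join (simplex_boundary (sigma_T V T c))
      (join_family (V - set (root_path V T c)) (\<lambda>y. two_points (parent T y, y) (c, y)))"

end

theory Submission
  imports Defs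
begin


definition indeg1 :: "('a \<times> 'a) set \<Rightarrow> bool" where
  "indeg1 T \<longleftrightarrow> (\<forall>x y z. (x,z)\<in>T \<longrightarrow> (y,z)\<in>T \<longrightarrow> x=y)"

lemma path_reach:
  assumes "\<forall>i. Suc i < length xs \<longrightarrow> (xs ! i, xs ! Suc i) \<in> T" "i \<le> j" "j < length xs"
  shows "(xs!i, xs!j) \<in> T\<^sup>*"
  using assms(2,3)
proof (induction j)
  case 0 thus ?case by simp
next
  case (Suc j)
  show ?case
  proof (cases "i = Suc j")
    case True thus ?thesis by simp
  next
    case False
    hence "(xs!i, xs!j) \<in> T\<^sup>*" using Suc by simp
    moreover have "(xs!j, xs!Suc j) \<in> T" using assms(1) Suc.prems by simp
    ultimately show ?thesis by (rule rtrancl_into_rtrancl)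
  qed
qed

lemma dpath_mem_reach:
  assumes "dpath T u v xs" "w \<in> set xs"
  shows "(u,w)\<in>T\<^sup>* \<and> (w,v)\<in>T\<^sup>*"
proof -
  from assms(2) obtain j where j: "j < length xs" "w = xs!j" by (auto simp: in_set_conv_nth)
  have e: "\<forall>i. Suc i < length xs \<longrightarrow> (xs ! i, xs ! Suc i) \<in> T" and ne: "xs \<noteq> []"
    using assms(1) by (auto simp: dpath_def)
  have "u = xs!0" using assms(1) ne by (simp add: dpath_def hd_conv_nth)
  moreover have "v = xs!(length xs - 1)" using assms(1) ne by (simp add: dpath_def last_conv_nth)
  ultimately show ?thesis using path_reach[OF e, of 0 j] path_reach[OF e, of j "length xs - 1"] j ne
    by auto
qed

lemma dpath_snoc:
  assumes "dpath T r u xs" "(u,z)\<in>T" "z \<notin> set xs"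
  shows "dpath T r z (xs@[z])"
proof -
  have ne: "xs \<noteq> []" and l: "last xs = u" using assms(1) by (auto simp: dpath_def)
  have "\<forall>i. Suc i < length (xs@[z]) \<longrightarrow> ((xs@[z]) ! i, (xs@[z]) ! Suc i) \<in> T"
  proof (intro allI impI)
    fix i assume i: "Suc i < length (xs@[z])"
    show "((xs@[z]) ! i, (xs@[z]) ! Suc i) \<in> T"
    proof (cases "Suc i < length xs")
      case True thus ?thesis using assms(1) by (simp add: nth_append dpath_def)
    next
      case False
      hence "i = length xs - 1" using i by simp
      thus ?thesis using ne l assms(2) by (simp add: nth_append last_conv_nth)
    qed
  qed
  thus ?thesis using assms ne by (simp add: dpath_def)
qed

lemma reach_dpath:
  assumes "(r,v)\<in>T\<^sup>*" "acyclic T"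
  shows "\<exists>xs. dpath T r v xs"
  using assms(1)
proof (induction rule: rtrancl_induct)
  case base
  have "dpath T r r [r]" by (simp add: dpath_def)
  thus ?case by blast
next
  case (step u v)
  then obtain xs where xs: "dpath T r u xs" by blast
  have "v \<notin> set xs"
  proof
    assume "v \<in> set xs"
    hence "(v,u)\<in>T\<^sup>*" using dpath_mem_reach[OF xs] by blast
    hence "(v,v)\<in>T\<^sup>+" using step(2) by (meson rtrancl_into_trancl1)
    thus False using assms(2) by (simp add: acyclic_def)
  qed
  thus ?case using dpath_snoc[OF xs step(2)] by blast
qed

lemma dpath_butlast:
  assumes "dpath T r v (xs@[x])" "xs \<noteq> []"
  shows "dpath T r (last xs) xs \<and> (last xs, x) \<in> T \<and> x = v \<and> v \<noteq> r"
proof -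
  have e: "\<forall>i. Suc i < length (xs@[x]) \<longrightarrow> ((xs@[x]) ! i, (xs@[x]) ! Suc i) \<in> T"
    using assms(1) unfolding dpath_def by blast
  have "\<forall>i. Suc i < length xs \<longrightarrow> (xs ! i, xs ! Suc i) \<in> T"
  proof (intro allI impI)
    fix i assume "Suc i < length xs"
    thus "(xs ! i, xs ! Suc i) \<in> T" using e[rule_format, of i] by (simp add: nth_append)
  qed
  moreover have "(last xs, x) \<in> T"
    using e[rule_format, of "length xs - 1"] assms(2) by (simp add: nth_append last_conv_nth)
  moreover have h: "hd xs = r" using assms by (simp add: dpath_def)
  moreover have d: "distinct xs" "x \<notin> set xs" using assms by (auto simp: dpath_def)
  moreover have "last (xs@[x]) = v" using assms unfolding dpath_def by blast
  hence xv: "x = v" by simp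
  moreover have "r \<in> set xs" using h assms(2) by auto
  ultimately show ?thesis using assms(2) unfolding dpath_def by (metis)
qed

lemma dpath_unique:
  assumes "indeg1 T"
  shows "dpath T r v xs \<Longrightarrow> dpath T r v ys \<Longrightarrow> xs = ys"
proof (induction xs arbitrary: v ys rule: rev_induct)
  case Nil thus ?case by (simp add: dpath_def)
next
  case (snoc x xs)
  have ysne: "ys \<noteq> []" using snoc.prems by (simp add: dpath_def)
  then obtain ys' y where ys: "ys = ys'@[y]" by (metis rev_exhaust)
  show ?case
  proof (cases "xs = []")
    case True
    hence "x = r" "v = r" using snoc.prems by (auto simp: dpath_def)
    have "ys' = []"
    proof (rule ccontr)
      assume "ys' \<noteq> []"
      thus False using dpath_butlast[of T r v ys' y] snoc.prems ys \<open>v = r\<close> by blast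
    qed
    thus ?thesis using True ys snoc.prems \<open>x = r\<close> by (simp add: dpath_def)
  next
    case False
    have A: "dpath T r (last xs) xs \<and> (last xs, x) \<in> T \<and> x = v \<and> v \<noteq> r"
      using dpath_butlast[OF snoc.prems(1) False] .
    have "ys' \<noteq> []"
    proof
      assume "ys' = []"
      thus False using snoc.prems(2) ys A by (auto simp: dpath_def)
    qed
    hence B: "dpath T r (last ys') ys' \<and> (last ys', y) \<in> T \<and> y = v \<and> v \<noteq> r"
      using dpath_butlast[of T r v ys' y] snoc.prems(2) ys by auto
    have "last xs = last ys'" using A B assms by (auto simp: indeg1_def)
    hence "xs = ys'" using snoc.IH A B by metis
    thus ?thesis using A B ys by simp
  qed
qed

lemma rooted_tree_iff:
  "rooted_tree V T r \<longleftrightarrow> T \<subseteq> V\<times>V \<and> r\<in>V \<and> acyclic T \<and> (\<forall>v\<in>V. (r,v)\<in>T\<^sup>*) \<and> indeg1 T"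
proof
  assume R: "rooted_tree V T r"
  hence TV: "T \<subseteq> V\<times>V" and rV: "r\<in>V" and ac: "acyclic T" and P: "\<forall>v\<in>V. \<exists>!xs. dpath T r v xs"
    by (auto simp: rooted_tree_def)
  have reach: "\<forall>v\<in>V. (r,v)\<in>T\<^sup>*"
  proof
    fix v assume "v\<in>V"
    then obtain xs where "dpath T r v xs" using P by blast
    thus "(r,v)\<in>T\<^sup>*" using dpath_mem_reach[of T r v xs v] by (auto simp: dpath_def)
  qed
  have id1: "indeg1 T" unfolding indeg1_def
  proof (intro allI impI)
    fix x y z assume xz: "(x,z)\<in>T" and yz: "(y,z)\<in>T"
    have V: "x\<in>V" "y\<in>V" "z\<in>V" using xz yz TV by auto
    obtain xs where xs: "dpath T r x xs" using P V by blast
    obtain ys where ys: "dpath T r y ys" using P V by blast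
    have nx: "z \<notin> set xs"
    proof
      assume "z \<in> set xs"
      hence "(z,x)\<in>T\<^sup>*" using dpath_mem_reach[OF xs] by blast
      hence "(z,z)\<in>T\<^sup>+" using xz by (meson rtrancl_into_trancl1)
      thus False using ac by (simp add: acyclic_def)
    qed
    have ny: "z \<notin> set ys"
    proof
      assume "z \<in> set ys"
      hence "(z,y)\<in>T\<^sup>*" using dpath_mem_reach[OF ys] by blast
      hence "(z,z)\<in>T\<^sup>+" using yz by (meson rtrancl_into_trancl1)
      thus False using ac by (simp add: acyclic_def)
    qed
    have "xs@[z] = ys@[z]" using P V dpath_snoc[OF xs xz nx] dpath_snoc[OF ys yz ny] by blast
    hence "xs = ys" by simp
    thus "x = y" using xs ys by (simp add: dpath_def)
  qed
  show "T \<subseteq> V\<times>V \<and> r\<in>V \<and> acyclic T \<and> (\<forall>v\<in>V. (r,v)\<in>T\<^sup>*) \<and> indeg1 T"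
    by (intro conjI TV rV ac reach id1)
next
  assume A: "T \<subseteq> V\<times>V \<and> r\<in>V \<and> acyclic T \<and> (\<forall>v\<in>V. (r,v)\<in>T\<^sup>*) \<and> indeg1 T"
  have "\<forall>v\<in>V. \<exists>!xs. dpath T r v xs"
  proof
    fix v assume "v\<in>V"
    hence "(r,v)\<in>T\<^sup>*" using A by blast
    then obtain xs where xs: "dpath T r v xs" using A reach_dpath by metis
    have "indeg1 T" using A by blast
    hence "\<And>ys. dpath T r v ys \<Longrightarrow> ys = xs" using dpath_unique xs by metis
    thus "\<exists>!xs. dpath T r v xs" using xs by blast
  qed
  thus "rooted_tree V T r" using A by (simp add: rooted_tree_def)
qed

lemma rooted_root_unique:
  assumes "rooted_tree V T r" "rooted_tree V T s"
  shows "r = s"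
proof (rule ccontr)
  assume ne: "r \<noteq> s"
  have "(r,s)\<in>T\<^sup>*" "(s,r)\<in>T\<^sup>*" "acyclic T" using assms by (auto simp: rooted_tree_iff)
  hence "(r,r)\<in>T\<^sup>+" using ne by (meson rtrancl_eq_or_trancl trancl_rtrancl_trancl)
  thus False using \<open>acyclic T\<close> by (simp add: acyclic_def)
qed

lemma tree_root_eq: "rooted_tree V T r \<Longrightarrow> tree_root V T = r"
  unfolding tree_root_def by (rule the_equality, assumption, erule rooted_root_unique)



lemma acyclic_pot:
  fixes f :: "'a \<Rightarrow> nat"
  assumes "\<forall>x y. (x,y)\<in>R \<longrightarrow> f x < f y"
  shows "acyclic R"
proof -
  have "(x,y)\<in>R\<^sup>+ \<Longrightarrow> f x < f y" for x y
    by (induction rule: trancl_induct) (use assms in fastforce)+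
  thus ?thesis unfolding acyclic_def by blast
qed

lemma acyclic_combine:
  assumes "acyclic A" "acyclic T" "A \<subseteq> (-Ou) \<times> (-Ou)" "B \<subseteq> UNIV \<times> Ou"
    "\<forall>x y. (x,y)\<in>B \<longrightarrow> x\<in>Ou \<longrightarrow> (x,y)\<in>T"
  shows "acyclic (A\<union>B)"
proof -
  have L1: "(u,w)\<in>(A\<union>B)\<^sup>+ \<Longrightarrow> u\<in>Ou \<Longrightarrow> (u,w)\<in>T\<^sup>+ \<and> w\<in>Ou" for u w
  proof (induction rule: trancl_induct)
    case (base y) thus ?case using assms(3-5) by blast
  next
    case (step y z)
    hence y: "(u,y)\<in>T\<^sup>+" "y\<in>Ou" by auto
    hence "(y,z)\<notin>A" using assms(3) by blast
    hence "(y,z)\<in>B" using step(2) by blast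
    hence "(y,z)\<in>T" "z\<in>Ou" using assms(4,5) y by blast+
    thus ?case using y by (meson trancl_into_trancl)
  qed
  have L2: "(u,w)\<in>(A\<union>B)\<^sup>+ \<Longrightarrow> u\<notin>Ou \<Longrightarrow> w\<notin>Ou \<Longrightarrow> (u,w)\<in>A\<^sup>+" for u w
  proof (induction rule: trancl_induct)
    case (base y) thus ?case using assms(3-5) by blast
  next
    case (step y z)
    hence "(y,z)\<in>A" using assms(4) by blast
    hence "y \<notin> Ou" using assms(3) by blast
    hence "(u,y)\<in>A\<^sup>+" using step by blast
    thus ?case using \<open>(y, z) \<in> A\<close> by (meson trancl_into_trancl)
  qed
  show ?thesis unfolding acyclic_def
  proof (intro allI notI)
    fix v assume v: "(v,v)\<in>(A\<union>B)\<^sup>+"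
    show False
    proof (cases "v\<in>Ou")
      case True thus False using L1[OF v] assms(2) by (simp add: acyclic_def)
    next
      case False thus False using L2[OF v] assms(1) by (simp add: acyclic_def)
    qed
  qed
qed

lemma root_path_dpath:
  assumes "rooted_tree V T r" "c \<in> V"
  shows "dpath T r c (root_path V T c)"
proof -
  have "\<exists>!xs. dpath T r c xs" using assms by (simp add: rooted_tree_def)
  thus ?thesis unfolding root_path_def tree_root_eq[OF assms(1)] by (rule theI')
qed

lemma parent_eq: "indeg1 T \<Longrightarrow> (z,y)\<in>T \<Longrightarrow> parent T y = z"
  unfolding parent_def indeg1_def by (rule the_equality) blast+

lemma idx_nth:
  assumes "distinct P" "i < length P"
  shows "(SOME j. j < length P \<and> P!j = P!i) = i"
  using assms by (rule_tac some_equality) (auto simp: nth_eq_iff_index_eq)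

lemma indeg1_card:
  assumes "indeg1 F"
  shows "card {x. (x,y)\<in>F} \<le> 1 \<and> finite {x. (x,y)\<in>F}"
proof -
  have "{x. (x,y)\<in>F} = {} \<or> (\<exists>a. {x. (x,y)\<in>F} = {a})"
    using assms unfolding indeg1_def by blast
  thus ?thesis by auto
qed



lemma dir1:
  assumes dg: "digraph V E" and cs: "complete_source V E c" and c'V: "c' \<in> V" and cc': "c' \<noteq> c"
    and TT: "T \<in> trees_leaf V E c" and FS: "F \<in> S_T V T c"
  shows "directed_forest E F"
proof -
  obtain r where R: "rooted_tree V T r" and TE: "T \<subseteq> E" and leaf: "\<forall>y. (c,y)\<notin>T" and cV: "c\<in>V"
    using TT by (auto simp: trees_leaf_def spanning_tree_def is_leaf_def)
  have TV: "T \<subseteq> V\<times>V" and rV: "r\<in>V" and ac: "acyclic T" and reach: "\<forall>v\<in>V. (r,v)\<in>T\<^sup>*"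
    and ind: "indeg1 T" using R by (auto simp: rooted_tree_iff)
  have troot: "tree_root V T = r" using R by (rule tree_root_eq)
  define P where "P = root_path V T c"
  have dp: "dpath T r c P" unfolding P_def using R cV by (rule root_path_dpath)
  have rc: "r \<noteq> c"
  proof
    assume "r = c"
    hence "(c,c')\<in>T\<^sup>*" using reach c'V by auto
    thus False using cc' leaf by (metis converse_rtranclE)
  qed
  define L where "L = length P"
  have Pne: "P \<noteq> []" and hdP: "hd P = r" and lastP: "last P = c" and dist: "distinct P"
    and edges: "\<forall>i. Suc i < L \<longrightarrow> (P!i, P!Suc i) \<in> T"
    using dp by (auto simp: dpath_def L_def)
  have P0: "P!0 = r" using Pne hdP by (simp add: hd_conv_nth)
  have PL: "P!(L-1) = c" using Pne lastP by (simp add: last_conv_nth L_def)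
  have L2: "L \<ge> 2"
  proof (rule ccontr)
    assume "\<not> L \<ge> 2"
    moreover have "L > 0" using Pne by (simp add: L_def)
    ultimately have "L = 1" by arith
    thus False using P0 PL rc by simp
  qed
  define PE where "PE = {(P!i, P!Suc i) | i. Suc i < L}"
  define \<sigma> where "\<sigma> = PE \<union> {(c,r)}"
  have \<sigma>eq: "sigma_T V T c = \<sigma>" unfolding sigma_T_def \<sigma>_def PE_def L_def P_def troot Let_def ..
  define Off where "Off = V - set P"
  have PET: "PE \<subseteq> T" using edges PE_def by auto
  have setP: "set P = {P!i | i. i < L}" by (auto simp: L_def in_set_conv_nth)
  have \<sigma>P: "\<sigma> \<subseteq> set P \<times> set P"
  proof -
    have "PE \<subseteq> set P \<times> set P" unfolding PE_def setP by force
    moreover have "c \<in> set P" "r \<in> set P" using lastP hdP Pne by auto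
    ultimately show ?thesis unfolding \<sigma>_def by blast
  qed
  have cP: "c \<in> set P" and rP: "r \<in> set P" using lastP hdP Pne by auto
  have par: "\<forall>y\<in>Off. (parent T y, y) \<in> T"
  proof
    fix y assume y: "y \<in> Off"
    hence "y \<in> V" "y \<noteq> r" using rP Off_def by auto
    hence "(r,y)\<in>T\<^sup>*" "r \<noteq> y" using reach by auto
    then obtain z where "(z,y)\<in>T" by (metis rtranclE)
    thus "(parent T y, y) \<in> T" using parent_eq[OF ind] by simp
  qed
  from FS obtain A B f where F: "F = A \<union> B" and A: "A \<subset> \<sigma>" and B: "B = (\<Union>y\<in>Off. f y)"
    and fK: "\<forall>y\<in>Off. f y \<in> {{}, {(parent T y, y)}, {(c, y)}}"
    unfolding S_T_def join_def join_family_def simplex_boundary_def two_points_def \<sigma>eq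
      Off_def[symmetric] P_def[symmetric] by blast
  have Asub: "A \<subseteq> \<sigma>" using A by blast
  have Bchar: "\<forall>e\<in>B. \<exists>y\<in>Off. e \<in> f y \<and> (e = (parent T y, y) \<or> e = (c,y))"
  proof
    fix e assume "e \<in> B"
    then obtain y where y: "y \<in> Off" "e \<in> f y" using B by blast
    hence "f y = {} \<or> f y = {(parent T y, y)} \<or> f y = {(c, y)}" using fK by blast
    hence "e = (parent T y, y) \<or> e = (c,y)" using y by auto
    thus "\<exists>y\<in>Off. e \<in> f y \<and> (e = (parent T y, y) \<or> e = (c,y))" using y by blast
  qed
  have cr: "(c,r) \<in> E" using cs rV rc by (simp add: complete_source_def)
  have FE: "F \<subseteq> E"
  proof
    fix e assume "e \<in> F"
    hence "e \<in> \<sigma> \<or> e \<in> B" using F A by blast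
    thus "e \<in> E"
    proof
      assume "e \<in> \<sigma>" thus ?thesis using PET TE cr \<sigma>_def by blast
    next
      assume "e \<in> B"
      then obtain y where y: "y\<in>Off" "e = (parent T y, y) \<or> e = (c,y)" using Bchar by blast
      have "y \<noteq> c" "y \<in> V" using y cP Off_def by auto
      hence "(c,y)\<in>E" using cs by (simp add: complete_source_def)
      thus ?thesis using y par TE by blast
    qed
  qed
  have \<sigma>inj: "\<forall>x1 x2 y. (x1,y)\<in>\<sigma> \<longrightarrow> (x2,y)\<in>\<sigma> \<longrightarrow> x1 = x2"
  proof (intro allI impI)
    fix x1 x2 y assume h: "(x1,y)\<in>\<sigma>" "(x2,y)\<in>\<sigma>"
    have PEinj: "(a,y)\<in>PE \<Longrightarrow> (b,y)\<in>PE \<Longrightarrow> a = b" for a b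
    proof -
      assume "(a,y)\<in>PE" "(b,y)\<in>PE"
      then obtain i j where "Suc i < L" "Suc j < L" "a = P!i" "b = P!j" "y = P!Suc i" "y = P!Suc j"
        unfolding PE_def by blast
      thus "a = b" using dist by (simp add: nth_eq_iff_index_eq L_def)
    qed
    have PEr: "(a,r)\<notin>PE" for a
    proof
      assume "(a,r)\<in>PE"
      then obtain i where "Suc i < L" "r = P!Suc i" unfolding PE_def by blast
      hence "P!0 = P!Suc i" "0 < length P" "Suc i < length P" using P0 by (auto simp: L_def)
      thus False using dist nth_eq_iff_index_eq by fastforce
    qed
    show "x1 = x2" using h PEinj PEr unfolding \<sigma>_def by blast
  qed
  have Bsnd: "\<forall>e\<in>B. snd e \<in> Off" using Bchar by force
  have \<sigma>snd: "\<forall>e\<in>\<sigma>. snd e \<notin> Off" using \<sigma>P Off_def by auto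
  have fsnd: "\<forall>y\<in>Off. \<forall>e\<in>f y. snd e = y" using fK by fastforce
  have indF: "indeg1 F" unfolding indeg1_def
  proof (intro allI impI)
    fix x1 x2 y assume h: "(x1,y)\<in>F" "(x2,y)\<in>F"
    show "x1 = x2"
    proof (cases "y \<in> Off")
      case False
      hence "(x1,y)\<notin>B" "(x2,y)\<notin>B" using Bsnd by fastforce+
      hence "(x1,y)\<in>\<sigma>" "(x2,y)\<in>\<sigma>" using h F Asub by auto
      thus ?thesis using \<sigma>inj by blast
    next
      case True
      have "(x1,y)\<notin>A" "(x2,y)\<notin>A" using True Asub \<sigma>snd by fastforce+
      hence "(x1,y)\<in>B" "(x2,y)\<in>B" using h F by auto
      hence "(x1,y)\<in>f y" "(x2,y)\<in>f y" using B fsnd True by fastforce+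
      thus ?thesis using fK True by fastforce
    qed
  qed
  have acA: "acyclic A"
  proof (cases "(c,r)\<in>A")
    case False
    hence "A \<subseteq> T" using A PET \<sigma>_def by blast
    thus ?thesis using ac acyclic_subset by blast
  next
    case True
    then obtain e where e: "e \<in> PE" "e \<notin> A" using A \<sigma>_def by blast
    then obtain m where m: "Suc m < L" "e = (P!m, P!Suc m)" unfolding PE_def by blast
    define idx where "idx v = (SOME j. j < L \<and> P!j = v)" for v
    have idx: "i < L \<Longrightarrow> idx (P!i) = i" for i
      unfolding idx_def L_def using idx_nth[OF dist] by (simp add: L_def)
    define \<phi> where "\<phi> v = (if idx v \<le> m then idx v + L else idx v)" for v
    show ?thesis
    proof (rule acyclic_pot[where f = \<phi>], intro allI impI)
      fix x y assume xy: "(x,y)\<in>A"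
      hence "(x,y)\<in>PE \<or> (x,y) = (c,r)" using A \<sigma>_def by blast
      thus "\<phi> x < \<phi> y"
      proof
        assume "(x,y)\<in>PE"
        then obtain i where i: "Suc i < L" "x = P!i" "y = P!Suc i" unfolding PE_def by blast
        have "i \<noteq> m" using i m e xy by auto
        thus ?thesis using i idx[of i] idx[of "Suc i"] unfolding \<phi>_def by auto
      next
        assume "(x,y) = (c,r)"
        thus ?thesis using idx[of 0] idx[of "L-1"] P0 PL m L2 unfolding \<phi>_def by auto
      qed
    qed
  qed
  have acF: "acyclic F" unfolding F
  proof (rule acyclic_combine[where Ou = Off and T = T])
    show "acyclic A" by (rule acA)
    show "acyclic T" by (rule ac)
    show "A \<subseteq> (- Off) \<times> (- Off)" using Asub \<sigma>P Off_def by blast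
    show "B \<subseteq> UNIV \<times> Off" using Bsnd by force
    show "\<forall>x y. (x, y) \<in> B \<longrightarrow> x \<in> Off \<longrightarrow> (x, y) \<in> T"
    proof (intro allI impI)
      fix x y assume xy: "(x,y)\<in>B" "x\<in>Off"
      then obtain z where z: "z\<in>Off" "(x,y) = (parent T z, z) \<or> (x,y) = (c,z)" using Bchar by blast
      have "x \<noteq> c" using xy cP Off_def by auto
      hence "(x,y) = (parent T z, z)" using z by auto
      thus "(x,y)\<in>T" using par z by simp
    qed
  qed
  show ?thesis unfolding directed_forest_def using FE acF indeg1_card[OF indF] by blast
qed



lemma chain:
  assumes "indeg1 G" "(a,x)\<in>G\<^sup>*"
  shows "(b,x)\<in>G\<^sup>* \<Longrightarrow> (a,b)\<in>G\<^sup>* \<or> (b,a)\<in>G\<^sup>*"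
  using assms(2)
proof (induction arbitrary: b rule: rtrancl_induct)
  case base thus ?case by simp
next
  case (step y z)
  from step.prems show ?case
  proof (cases rule: rtranclE)
    case base thus ?thesis using step.hyps by (meson rtrancl_into_rtrancl)
  next
    case (step w)
    have "w = y" using step(2) \<open>(y,z)\<in>G\<close> assms(1) by (simp add: indeg1_def)
    thus ?thesis using step(1) \<open>(b,y)\<in>G\<^sup>* \<Longrightarrow> _\<close> by blast
  qed
qed

lemma noin_eq: "(\<forall>z. (z,b)\<notin>G) \<Longrightarrow> (a,b)\<in>G\<^sup>* \<Longrightarrow> a = b"
  by (metis rtranclE)

lemma root_exists:
  assumes "finite G" "acyclic G"
  shows "\<exists>a. (a,v)\<in>G\<^sup>* \<and> (\<forall>z. (z,a)\<notin>G)"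
proof -
  have wf: "wf G" using assms by (rule finite_acyclic_wf)
  have "v \<in> {u. (u,v)\<in>G\<^sup>*}" by simp
  then obtain a where a: "a \<in> {u. (u,v)\<in>G\<^sup>*}" "\<forall>y. (y,a)\<in>G \<longrightarrow> y \<notin> {u. (u,v)\<in>G\<^sup>*}"
    using wfE_min[OF wf] by metis
  have "\<forall>z. (z,a)\<notin>G"
  proof (intro allI notI)
    fix z assume "(z,a)\<in>G"
    hence "(z,v)\<in>G\<^sup>*" using a(1) by (simp add: converse_rtrancl_into_rtrancl)
    thus False using a(2) \<open>(z,a)\<in>G\<close> by blast
  qed
  thus ?thesis using a(1) by blast
qed



lemma dir2:
  assumes dg: "digraph V E" and cs: "complete_source V E c" and cs': "complete_source V E c'"
    and cc': "c' \<noteq> c" and FF: "directed_forest E F"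
  shows "\<exists>T\<in>trees_leaf V E c. F \<in> S_T V T c"
proof -
  have finV: "finite V" and EV: "E \<subseteq> V\<times>V" using dg by (auto simp: digraph_def)
  have cV: "c\<in>V" and c'V: "c'\<in>V" using cs cs' by (auto simp: complete_source_def)
  have FE: "F \<subseteq> E" and acF: "acyclic F" using FF by (auto simp: directed_forest_def)
  have indF: "indeg1 F" unfolding indeg1_def
  proof (intro allI impI)
    fix x y z assume h: "(x,z)\<in>F" "(y,z)\<in>F"
    have "card {x. (x,z)\<in>F} \<le> 1" "finite {x. (x,z)\<in>F}" using FF by (auto simp: directed_forest_def)
    thus "x = y" using h card_le_Suc0_iff_eq by fastforce
  qed
  define G where "G = {e\<in>F. fst e \<noteq> c}"
  have GF: "G \<subseteq> F" unfolding G_def by blast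
  have finG: "finite G" using GF FE EV finV by (meson finite_SigmaI finite_subset)
  have acG: "acyclic G" using acF GF acyclic_subset by blast
  have indG: "indeg1 G" using indF GF unfolding indeg1_def by blast
  have GV: "G \<subseteq> V\<times>V" using GF FE EV by blast
  have Gc: "\<forall>y. (c,y)\<notin>G" unfolding G_def by auto
  obtain r' where r': "(r',c')\<in>G\<^sup>*" "\<forall>z. (z,r')\<notin>G" using root_exists[OF finG acG] by blast
  have runiq: "\<And>a. (a,c')\<in>G\<^sup>* \<Longrightarrow> \<forall>z. (z,a)\<notin>G \<Longrightarrow> a = r'"
  proof -
    fix a assume a: "(a,c')\<in>G\<^sup>*" "\<forall>z. (z,a)\<notin>G"
    have "(a,r')\<in>G\<^sup>* \<or> (r',a)\<in>G\<^sup>*" using chain[OF indG a(1) r'(1)] .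
    thus "a = r'" using noin_eq a(2) r'(2) by metis
  qed
  have inV: "\<And>a v. (a,v)\<in>G\<^sup>* \<Longrightarrow> v\<in>V \<Longrightarrow> a\<in>V"
    using GV by (metis converse_rtranclE mem_Sigma_iff subsetD)
  have r'V: "r'\<in>V" using inV r'(1) c'V by blast
  define Tg where "Tg = {u\<in>V. (\<forall>z. (z,u)\<notin>G) \<and> (u,c')\<notin>G\<^sup>*}"
  define T where "T = G \<union> {(c',u) | u. u\<in>Tg}"
  have GT: "G \<subseteq> T" unfolding T_def by blast
  have GTs: "(a,b)\<in>G\<^sup>* \<Longrightarrow> (a,b)\<in>T\<^sup>*" for a b using GT rtrancl_mono by blast
  have Tcases: "(x,y)\<in>T \<Longrightarrow> (x,y)\<in>G \<or> (x = c' \<and> y\<in>Tg)" for x y unfolding T_def by blast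
  have Tg_reach: "u\<in>Tg \<Longrightarrow> (u,w)\<in>T\<^sup>* \<Longrightarrow> (u,w)\<in>G\<^sup>*" for u w
  proof -
    assume u: "u\<in>Tg"
    show "(u,w)\<in>T\<^sup>* \<Longrightarrow> (u,w)\<in>G\<^sup>*"
    proof (induction rule: rtrancl_induct)
      case base thus ?case by simp
    next
      case (step x y)
      show ?case
      proof (cases "(x,y)\<in>G")
        case True thus ?thesis using step by (meson rtrancl_into_rtrancl)
      next
        case False
        hence "x = c'" using Tcases step(2) by blast
        thus ?thesis using step(3) u Tg_def by blast
      qed
    qed
  qed
  have tr: "(x,y)\<in>T\<^sup>+ \<Longrightarrow> (x,y)\<in>G\<^sup>+ \<or> (\<exists>u\<in>Tg. (x,c')\<in>T\<^sup>* \<and> (u,y)\<in>G\<^sup>*)" for x y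
  proof (induction rule: trancl_induct)
    case (base y)
    thus ?case using Tcases by blast
  next
    case (step y z)
    show ?case
    proof (cases "(y,z)\<in>G")
      case True
      from step(3) show ?thesis
      proof
        assume "(x,y)\<in>G\<^sup>+" thus ?thesis using True by (meson trancl_into_trancl)
      next
        assume "\<exists>u\<in>Tg. (x,c')\<in>T\<^sup>* \<and> (u,y)\<in>G\<^sup>*"
        thus ?thesis using True by (meson rtrancl_into_rtrancl)
      qed
    next
      case False
      hence "y = c'" "z\<in>Tg" using Tcases step(2) by blast+
      thus ?thesis using step(1) by (meson rtrancl.rtrancl_refl trancl_into_rtrancl)
    qed
  qed
  have acT: "acyclic T" unfolding acyclic_def
  proof (intro allI notI)
    fix x assume "(x,x)\<in>T\<^sup>+"
    from tr[OF this] show False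
    proof
      assume "(x,x)\<in>G\<^sup>+" thus False using acG by (simp add: acyclic_def)
    next
      assume "\<exists>u\<in>Tg. (x,c')\<in>T\<^sup>* \<and> (u,x)\<in>G\<^sup>*"
      then obtain u where u: "u\<in>Tg" "(x,c')\<in>T\<^sup>*" "(u,x)\<in>G\<^sup>*" by blast
      have "(u,c')\<in>T\<^sup>*" using u GTs by (meson rtrancl_trans)
      hence "(u,c')\<in>G\<^sup>*" using Tg_reach u(1) by blast
      thus False using u(1) Tg_def by blast
    qed
  qed
  have indT: "indeg1 T" unfolding indeg1_def
  proof (intro allI impI)
    fix x y z assume h: "(x,z)\<in>T" "(y,z)\<in>T"
    show "x = y"
    proof (cases "(x,z)\<in>G")
      case True
      hence "z \<notin> Tg" using Tg_def by blast
      hence "(y,z)\<in>G" using Tcases h(2) by blast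
      thus ?thesis using indG True by (simp add: indeg1_def)
    next
      case False
      hence "x = c'" "z\<in>Tg" using Tcases h(1) by blast+
      hence "(y,z)\<notin>G" using Tg_def by blast
      thus ?thesis using Tcases h(2) \<open>x = c'\<close> by blast
    qed
  qed
  have TgV: "Tg \<subseteq> V" unfolding Tg_def by blast
  have TV: "T \<subseteq> V\<times>V" using GV TgV c'V unfolding T_def by blast
  have reach: "\<forall>v\<in>V. (r',v)\<in>T\<^sup>*"
  proof
    fix v assume v: "v\<in>V"
    obtain a where a: "(a,v)\<in>G\<^sup>*" "\<forall>z. (z,a)\<notin>G" using root_exists[OF finG acG] by blast
    show "(r',v)\<in>T\<^sup>*"
    proof (cases "(a,c')\<in>G\<^sup>*")
      case True
      hence "a = r'" using runiq a(2) by blast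
      thus ?thesis using a(1) GTs by blast
    next
      case False
      hence "a\<in>Tg" using a inV v Tg_def by blast
      hence "(c',a)\<in>T" unfolding T_def by blast
      hence "(r',a)\<in>T\<^sup>*" using GTs[OF r'(1)] by (meson rtrancl_into_rtrancl)
      thus ?thesis using GTs[OF a(1)] by (meson rtrancl_trans)
    qed
  qed
  have R: "rooted_tree V T r'" unfolding rooted_tree_iff using TV r'V acT reach indT by blast
  have TE: "T \<subseteq> E"
  proof
    fix e assume "e\<in>T"
    then obtain x y where e: "e = (x,y)" "(x,y)\<in>T" by (cases e) auto
    show "e\<in>E"
    proof (cases "(x,y)\<in>G")
      case True thus ?thesis using e GF FE by blast
    next
      case False
      hence "x = c'" "y\<in>Tg" using Tcases e(2) by blast+
      hence "y \<noteq> c'" "y\<in>V" using Tg_def by auto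
      thus ?thesis using cs' e \<open>x = c'\<close> by (simp add: complete_source_def)
    qed
  qed
  have leaf: "\<forall>y. (c,y)\<notin>T" using Gc cc' Tcases by blast
  have TT: "T \<in> trees_leaf V E c"
    unfolding trees_leaf_def spanning_tree_def is_leaf_def using TE R cV leaf by blast
  have troot: "tree_root V T = r'" using R by (rule tree_root_eq)
  define P where "P = root_path V T c"
  have dp: "dpath T r' c P" unfolding P_def using R cV by (rule root_path_dpath)
  define L where "L = length P"
  have Pne: "P \<noteq> []" and hdP: "hd P = r'" and lastP: "last P = c" and dist: "distinct P"
    and edges: "\<forall>i. Suc i < L \<longrightarrow> (P!i, P!Suc i) \<in> T"
    using dp by (auto simp: dpath_def L_def)
  have P0: "P!0 = r'" using Pne hdP by (simp add: hd_conv_nth)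
  have PL: "P!(L-1) = c" using Pne lastP by (simp add: last_conv_nth L_def)
  define PE where "PE = {(P!i, P!Suc i) | i. Suc i < L}"
  define \<sigma> where "\<sigma> = PE \<union> {(c,r')}"
  have \<sigma>eq: "sigma_T V T c = \<sigma>" unfolding sigma_T_def \<sigma>_def PE_def L_def P_def troot Let_def ..
  define Off where "Off = V - set P"
  define f where "f y = {e\<in>F. snd e = y}" for y
  define A where "A = F \<inter> \<sigma>"
  define B where "B = (\<Union>y\<in>Off. f y)"
  have inP: "(u,y)\<in>F \<Longrightarrow> y \<in> set P \<Longrightarrow> (u,y)\<in>\<sigma>" for u y
  proof -
    assume uy: "(u,y)\<in>F" and yP: "y \<in> set P"
    show "(u,y)\<in>\<sigma>"
    proof (cases "y = r'")
      case True
      have "u = c"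
      proof (rule ccontr)
        assume "u \<noteq> c" hence "(u,y)\<in>G" using uy G_def by auto
        thus False using True r'(2) by blast
      qed
      thus ?thesis using True \<sigma>_def by blast
    next
      case False
      show ?thesis
      proof (cases "u = c")
        case uc: False
        hence uyT: "(u,y)\<in>T" using uy G_def GT by auto
        obtain j where j: "j < L" "y = P!j" using yP by (auto simp: in_set_conv_nth L_def)
        have "j \<noteq> 0" proof assume "j = 0" thus False using j False P0 by simp qed
        then obtain i where i: "j = Suc i" by (cases j) auto
        have "(P!i, y)\<in>T" using edges j i by simp
        hence "u = P!i" using indT uyT by (simp add: indeg1_def)
        thus ?thesis using i j \<sigma>_def PE_def by blast
      next
        case uc: True
        have noin: "\<forall>z. (z,y)\<notin>G"
        proof (intro allI notI)
          fix z assume "(z,y)\<in>G"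
          hence "(z,y)\<in>F" "z \<noteq> c" using G_def by auto
          thus False using uy uc indF by (simp add: indeg1_def)
        qed
        have yV: "y\<in>V" using uy FE EV by blast
        have "(y,c')\<notin>G\<^sup>*" using runiq noin False by blast
        hence yTg: "y\<in>Tg" using yV noin Tg_def by blast
        have "(y,c)\<in>T\<^sup>*" using dpath_mem_reach[OF dp yP] by blast
        hence "(y,c)\<in>G\<^sup>*" using Tg_reach yTg by blast
        hence "(y,c)\<in>F\<^sup>*" using GF rtrancl_mono by blast
        hence "(c,c)\<in>F\<^sup>+" using uy uc by (meson rtrancl_into_trancl2)
        thus ?thesis using acF by (simp add: acyclic_def)
      qed
    qed
  qed
  have Aprop: "A \<subset> \<sigma>"
  proof -
    have "\<not> \<sigma> \<subseteq> F"
    proof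
      assume s: "\<sigma> \<subseteq> F"
      hence "\<forall>i. Suc i < length P \<longrightarrow> (P!i, P!Suc i) \<in> F" using \<sigma>_def PE_def L_def by blast
      hence "(P!0, P!(L-1))\<in>F\<^sup>*" using path_reach[of P F 0 "L-1"] Pne L_def by simp
      hence "(r',c)\<in>F\<^sup>*" using P0 PL by simp
      moreover have "(c,r')\<in>F" using s \<sigma>_def by blast
      ultimately have "(c,c)\<in>F\<^sup>+" by (meson rtrancl_into_trancl2)
      thus False using acF by (simp add: acyclic_def)
    qed
    thus ?thesis using A_def by blast
  qed
  have fK: "\<forall>y\<in>Off. f y \<in> two_points (parent T y, y) (c, y)"
  proof
    fix y assume y: "y\<in>Off"
    show "f y \<in> two_points (parent T y, y) (c, y)"
    proof (cases "f y = {}")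
      case True thus ?thesis by (simp add: two_points_def)
    next
      case False
      then obtain u where u: "(u,y)\<in>F" using f_def by auto
      have fy: "f y = {(u,y)}" using u indF unfolding f_def indeg1_def by auto
      show ?thesis
      proof (cases "u = c")
        case True thus ?thesis using fy by (simp add: two_points_def)
      next
        case False
        hence "(u,y)\<in>T" using u G_def GT by auto
        hence "parent T y = u" using parent_eq[OF indT] by simp
        thus ?thesis using fy by (simp add: two_points_def)
      qed
    qed
  qed
  have Fsplit: "F = A \<union> B"
  proof
    show "F \<subseteq> A \<union> B"
    proof
      fix e assume e: "e\<in>F"
      obtain u y where uy: "e = (u,y)" by (cases e) auto
      have "y\<in>V" using e uy FE EV by blast
      show "e \<in> A \<union> B"
      proof (cases "y \<in> set P")
        case True thus ?thesis using inP e uy A_def by blast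
      next
        case False
        hence "y\<in>Off" using \<open>y\<in>V\<close> Off_def by blast
        thus ?thesis using e uy B_def f_def by auto
      qed
    qed
  next
    show "A \<union> B \<subseteq> F" using A_def B_def f_def by blast
  qed
  have "F \<in> S_T V T c"
    unfolding S_T_def join_def join_family_def simplex_boundary_def \<sigma>eq
    using Fsplit Aprop fK unfolding B_def Off_def P_def by blast
  thus ?thesis using TT by blast
qed


theorem mainTheorem3:
  fixes V :: "'a set" and E :: "('a \<times> 'a) set" and c c' :: 'a
  assumes "digraph V E"
    and "complete_source V E c" and "complete_source V E c'" and "c \<noteq> c'"
  shows "(\<forall>T \<in> trees_leaf V E c. S_T V T c \<subseteq> tree_complex E)
         \<and> tree_complex E = (\<Union>T \<in> trees_leaf V E c. S_T V T c)"
proof -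
  have c'V: "c' \<in> V" using assms(3) by (simp add: complete_source_def)
  have cc': "c' \<noteq> c" using assms(4) by simp
  have P1: "\<forall>T \<in> trees_leaf V E c. S_T V T c \<subseteq> tree_complex E"
  proof (intro ballI subsetI)
    fix T F assume "T \<in> trees_leaf V E c" "F \<in> S_T V T c"
    thus "F \<in> tree_complex E" using dir1[OF assms(1,2) c'V cc'] by (simp add: tree_complex_def)
  qed
  have "tree_complex E \<subseteq> (\<Union>T \<in> trees_leaf V E c. S_T V T c)"
  proof
    fix F assume "F \<in> tree_complex E"
    hence "directed_forest E F" by (simp add: tree_complex_def)
    thus "F \<in> (\<Union>T \<in> trees_leaf V E c. S_T V T c)"
      using dir2[OF assms(1,2,3) cc'] by blast
  qed
  moreover have "(\<Union>T \<in> trees_leaf V E c. S_T V T c) \<subseteq> tree_complex E" using P1 by blast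
  ultimately show ?thesis using P1 by blast
qed

end
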